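(* Let $K$ be an algebraically closed field of characteristic $0$, let $\mathcal{L}$ be a line of type $(1,1,0)$ in $\mathbb{P}^1\times\mathbb{P}^1\times\mathbb{P}^1$ over $K$, and let $X$ be a finite set of distinct points with $X\subseteq\mathcal{L}$ and $|X|=s$. Then $H_X(i,j,k)=\min\{k+1,s\}$ for all $(i,j,k)\in\mathbb{N}^3$.
   Context: Let $R=K[x_0,x_1,y_0,y_1,z_0,z_1]$ be $\mathbb{N}^3$-graded with $\deg x_i=(1,0,0)$, $\deg y_i=(0,1,0)$, $\deg z_i=(0,0,1)$. For a point $P=[a_0:a_1]\times[b_0:b_1]\times[c_0:c_1]$, $I(P)=(a_1x_0-a_0x_1,\,b_1y_0-b_0y_1,\,c_1z_0-c_0z_1)$, and for $X=\{P_1,\dots,P_s\}$, $I(X)=\bigcap_i I(P_i)$. The Hilbert function is $H_X(i,j,k)=\dim_K R_{i,j,k}-\dim_K I(X)_{i,j,k}$. A line of type $(1,1,0)$ is the subvariety defined by an ideal $(L,L')$ with $L\in R_{1,0,0}$, $L'\in R_{0,1,0}$ nonzero. *)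

theory Defs
  imports "HOL-Library.Poly_Mapping" "HOL-Computational_Algebra.Polynomial"
begin

datatype var = X0 | X1 | Y0 | Y1 | Z0 | Z1

type_synonym 'k mpoly = "(var \<Rightarrow>\<^sub>0 nat) \<Rightarrow>\<^sub>0 'k"

definition Var :: "var \<Rightarrow> 'k::comm_ring_1 mpoly" where
  "Var v = Poly_Mapping.single (Poly_Mapping.single v 1) 1"

definition Const :: "'k::comm_ring_1 \<Rightarrow> 'k mpoly" where
  "Const c = Poly_Mapping.single 0 c"

definition mscale :: "'k::comm_ring_1 \<Rightarrow> 'k mpoly \<Rightarrow> 'k mpoly" where
  "mscale c p = Poly_Mapping.map (\<lambda>a. c * a) p"

definition tdeg :: "(var \<Rightarrow>\<^sub>0 nat) \<Rightarrow> nat \<times> nat \<times> nat" where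
  "tdeg m = (Poly_Mapping.lookup m X0 + Poly_Mapping.lookup m X1, Poly_Mapping.lookup m Y0 + Poly_Mapping.lookup m Y1, Poly_Mapping.lookup m Z0 + Poly_Mapping.lookup m Z1)"

definition Rdeg :: "nat \<Rightarrow> nat \<Rightarrow> nat \<Rightarrow> 'k::comm_ring_1 mpoly set" where
  "Rdeg i j k = {p. \<forall>m \<in> Poly_Mapping.keys p. tdeg m = (i, j, k)}"

text \<open>A point of P1 x P1 x P1, given by representatives ((a0,a1),(b0,b1),(c0,c1)),
  each pair nonzero.\<close>
type_synonym 'k pt = "('k \<times> 'k) \<times> ('k \<times> 'k) \<times> ('k \<times> 'k)"

definition valid_pt :: "'k::field pt \<Rightarrow> bool" where
  "valid_pt P = (case P of ((a0,a1),(b0,b1),(c0,c1)) \<Rightarrow>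
     (a0,a1) \<noteq> (0,0) \<and> (b0,b1) \<noteq> (0,0) \<and> (c0,c1) \<noteq> (0,0))"

definition same_pt :: "'k::field pt \<Rightarrow> 'k pt \<Rightarrow> bool" where
  "same_pt P Q = (case P of ((a0,a1),(b0,b1),(c0,c1)) \<Rightarrow> case Q of ((a0',a1'),(b0',b1'),(c0',c1')) \<Rightarrow>
     a0 * a1' = a1 * a0' \<and> b0 * b1' = b1 * b0' \<and> c0 * c1' = c1 * c0')"

definition coord :: "'k pt \<Rightarrow> var \<Rightarrow> 'k" where
  "coord P v = (case P of ((a0,a1),(b0,b1),(c0,c1)) \<Rightarrow>
     (case v of X0 \<Rightarrow> a0 | X1 \<Rightarrow> a1 | Y0 \<Rightarrow> b0 | Y1 \<Rightarrow> b1 | Z0 \<Rightarrow> c0 | Z1 \<Rightarrow> c1))"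

definition eval_at :: "'k::comm_ring_1 mpoly \<Rightarrow> 'k pt \<Rightarrow> 'k" where
  "eval_at p P = (\<Sum>m \<in> Poly_Mapping.keys p. Poly_Mapping.lookup p m * (\<Prod>v \<in> Poly_Mapping.keys m. coord P v ^ Poly_Mapping.lookup m v))"

definition ideal_pt :: "'k::field pt \<Rightarrow> 'k mpoly set" where
  "ideal_pt P = (case P of ((a0,a1),(b0,b1),(c0,c1)) \<Rightarrow>
     {g1 * (Const a1 * Var X0 - Const a0 * Var X1)
      + g2 * (Const b1 * Var Y0 - Const b0 * Var Y1)
      + g3 * (Const c1 * Var Z0 - Const c0 * Var Z1) | g1 g2 g3. True})"

definition ideal_pts :: "'k::field pt set \<Rightarrow> 'k mpoly set" where
  "ideal_pts X = {p. \<forall>P \<in> X. p \<in> ideal_pt P}"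

definition hilb :: "'k::field pt set \<Rightarrow> nat \<Rightarrow> nat \<Rightarrow> nat \<Rightarrow> nat" where
  "hilb X i j k = vector_space.dim mscale (Rdeg i j k :: 'k mpoly set)
                  - vector_space.dim mscale (ideal_pts X \<inter> Rdeg i j k)"

definition line110 :: "'k::field mpoly \<Rightarrow> 'k mpoly \<Rightarrow> bool" where
  "line110 L L' = (L \<in> Rdeg 1 0 0 \<and> L \<noteq> 0 \<and> L' \<in> Rdeg 0 1 0 \<and> L' \<noteq> 0)"

definition on_line :: "'k::field mpoly \<Rightarrow> 'k mpoly \<Rightarrow> 'k pt \<Rightarrow> bool" where
  "on_line L L' P = (eval_at L P = 0 \<and> eval_at L' P = 0)"

end

theory Submission
  imports Defs
begin


lemma var_UNIV: "(UNIV :: var set) = {X0,X1,Y0,Y1,Z0,Z1}"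
  using var.exhaust by auto

lemma finite_var: "finite (UNIV :: var set)"
  by (simp add: var_UNIV)

lemma mscale_Const: "mscale c p = Const c * p"
  unfolding mscale_def Const_def by (rule mult_map_scale_conv_mult)

lemma Const_mult: "Const a * Const b = Const (a * b)"
  unfolding Const_def by (simp add: mult_single)
lemma Const_add: "Const a + Const b = Const (a + b)"
  unfolding Const_def by (simp add: single_add)
lemma Const_one: "Const 1 = 1" unfolding Const_def by simp
lemma Const_zero: "Const 0 = 0" unfolding Const_def by simp

interpretation VS: vector_space "mscale :: 'a::field \<Rightarrow> 'a mpoly \<Rightarrow> 'a mpoly"
  by unfold_locales
    (simp_all add: mscale_Const algebra_simps Const_mult Const_one flip: Const_add)

definition mono :: "'k::comm_ring_1 pt \<Rightarrow> (var \<Rightarrow>\<^sub>0 nat) \<Rightarrow> 'k" where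
  "mono P m = (\<Prod>v \<in> Poly_Mapping.keys m. coord P v ^ Poly_Mapping.lookup m v)"

lemma mono_UNIV: "mono P m = (\<Prod>v\<in>UNIV. coord P v ^ Poly_Mapping.lookup m v)"
  unfolding mono_def
  by (rule prod.mono_neutral_left) (auto simp: finite_var in_keys_iff)

lemma mono_add: "mono P (a + b) = mono P a * mono P b"
  by (simp add: mono_UNIV lookup_add power_add prod.distrib)

lemma mono_zero: "mono P 0 = 1" by (simp add: mono_def)

lemma eval_at_mono: "eval_at p P = (\<Sum>m\<in>Poly_Mapping.keys p. Poly_Mapping.lookup p m * mono P m)"
  unfolding eval_at_def mono_def ..

lemma eval_at_superset:
  assumes "finite S" "Poly_Mapping.keys p \<subseteq> S"
  shows "eval_at p P = (\<Sum>m\<in>S. Poly_Mapping.lookup p m * mono P m)"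
  unfolding eval_at_mono
  by (rule sum.mono_neutral_left) (use assms in \<open>auto simp: in_keys_iff\<close>)

lemma eval_at_add: "eval_at (p + q) P = eval_at p P + eval_at q P"
proof -
  let ?S = "Poly_Mapping.keys p \<union> Poly_Mapping.keys q"
  have "eval_at (p + q) P = (\<Sum>m\<in>?S. Poly_Mapping.lookup (p+q) m * mono P m)"
    by (rule eval_at_superset) (auto simp: keys_add)
  also have "\<dots> = (\<Sum>m\<in>?S. Poly_Mapping.lookup p m * mono P m) + (\<Sum>m\<in>?S. Poly_Mapping.lookup q m * mono P m)"
    by (simp add: lookup_add algebra_simps sum.distrib)
  also have "\<dots> = eval_at p P + eval_at q P"
    by (simp add: eval_at_superset[symmetric])
  finally show ?thesis .
qed

lemma eval_at_zero[simp]: "eval_at 0 P = 0" by (simp add: eval_at_def)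

lemma eval_at_single: "eval_at (Poly_Mapping.single m c) P = c * mono P m"
  by (subst eval_at_superset[where S="{m}"]) (auto simp: mono_def)

lemma eval_at_sum: "eval_at (\<Sum>x\<in>A. f x) P = (\<Sum>x\<in>A. eval_at (f x) P)"
  by (induction A rule: infinite_finite_induct) (auto simp: eval_at_add)

lemma poly_decomp: "p = (\<Sum>m\<in>Poly_Mapping.keys p. Poly_Mapping.single m (Poly_Mapping.lookup p m))"
  by (rule poly_mapping_eqI)
     (simp add: lookup_sum lookup_single when_def in_keys_iff sum.delta' cong: if_cong)

lemma eval_at_mult: "eval_at (p * q) P = eval_at p P * eval_at q P"
proof -
  have "p * q = (\<Sum>a\<in>Poly_Mapping.keys p. \<Sum>b\<in>Poly_Mapping.keys q.
       Poly_Mapping.single (a + b) (Poly_Mapping.lookup p a * Poly_Mapping.lookup q b))"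
    apply (subst poly_decomp[of p], subst poly_decomp[of q])
    by (simp add: sum_distrib_left sum_distrib_right mult_single) (rule sum.swap)
  then have "eval_at (p * q) P = (\<Sum>a\<in>Poly_Mapping.keys p. \<Sum>b\<in>Poly_Mapping.keys q.
       (Poly_Mapping.lookup p a * mono P a) * (Poly_Mapping.lookup q b * mono P b))"
    by (simp add: eval_at_sum eval_at_single mono_add algebra_simps)
  also have "\<dots> = eval_at p P * eval_at q P"
    by (simp add: eval_at_mono sum_product)
  finally show ?thesis .
qed

lemma eval_at_Const[simp]: "eval_at (Const c) P = c"
  by (simp add: Const_def eval_at_single mono_zero)

lemma eval_at_one[simp]: "eval_at 1 P = 1"
  using eval_at_Const[of 1 P] by (simp add: Const_one)

lemma eval_at_Var[simp]: "eval_at (Var v) P = coord P v"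
  by (simp add: Var_def eval_at_single mono_def)

lemma eval_at_uminus: "eval_at (- p) P = - eval_at p P"
proof -
  have "eval_at p P + eval_at (-p) P = 0" using eval_at_add[of p "-p" P] by simp
  then show ?thesis by (metis minus_unique)
qed

lemma eval_at_diff: "eval_at (p - q) P = eval_at p P - eval_at q P"
  using eval_at_add[of p "-q" P] by (simp add: eval_at_uminus)

lemma eval_at_power: "eval_at (p ^ n) P = eval_at p P ^ n"
  by (induction n) (simp_all add: eval_at_mult)

lemma eval_at_mscale: "eval_at (mscale c p) P = c * eval_at p P"
  by (simp add: mscale_Const eval_at_mult)

definition lx :: "'k::comm_ring_1 pt \<Rightarrow> 'k mpoly" where
  "lx P = Const (coord P X1) * Var X0 - Const (coord P X0) * Var X1"
definition ly :: "'k::comm_ring_1 pt \<Rightarrow> 'k mpoly" where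
  "ly P = Const (coord P Y1) * Var Y0 - Const (coord P Y0) * Var Y1"
definition lz :: "'k::comm_ring_1 pt \<Rightarrow> 'k mpoly" where
  "lz P = Const (coord P Z1) * Var Z0 - Const (coord P Z0) * Var Z1"

lemma ideal_pt_alt: "ideal_pt P = {g1 * lx P + g2 * ly P + g3 * lz P | g1 g2 g3. True}"
  by (cases P) (auto simp: ideal_pt_def lx_def ly_def lz_def coord_def)

lemma ideal_add: assumes "p \<in> ideal_pt P" "q \<in> ideal_pt P" shows "p + q \<in> ideal_pt P"
proof -
  obtain g1 g2 g3 where p: "p = g1 * lx P + g2 * ly P + g3 * lz P" using assms(1) by (auto simp: ideal_pt_alt)
  obtain h1 h2 h3 where q: "q = h1 * lx P + h2 * ly P + h3 * lz P" using assms(2) by (auto simp: ideal_pt_alt)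
  have "p + q = (g1+h1) * lx P + (g2+h2) * ly P + (g3+h3) * lz P" by (simp add: p q algebra_simps)
  then show ?thesis unfolding ideal_pt_alt by blast
qed

lemma ideal_mult: "p \<in> ideal_pt P \<Longrightarrow> p * r \<in> ideal_pt P"
  unfolding ideal_pt_alt
  apply clarify
  subgoal for g1 g2 g3
    by (rule exI[of _ "g1*r"], rule exI[of _ "g2*r"], rule exI[of _ "g3*r"]) (simp add: algebra_simps)
  done

lemma ideal_zero: "0 \<in> ideal_pt P"
  unfolding ideal_pt_alt by (rule CollectI, rule exI[of _ 0], rule exI[of _ 0], rule exI[of _ 0]) simp

lemma ideal_lx: "lx P \<in> ideal_pt P"
  unfolding ideal_pt_alt by (rule CollectI, rule exI[of _ 1], rule exI[of _ 0], rule exI[of _ 0]) simp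
lemma ideal_ly: "ly P \<in> ideal_pt P"
  unfolding ideal_pt_alt by (rule CollectI, rule exI[of _ 0], rule exI[of _ 1], rule exI[of _ 0]) simp
lemma ideal_lz: "lz P \<in> ideal_pt P"
  unfolding ideal_pt_alt by (rule CollectI, rule exI[of _ 0], rule exI[of _ 0], rule exI[of _ 1]) simp

lemma ideal_uminus: "p \<in> ideal_pt P \<Longrightarrow> - p \<in> ideal_pt P"
  using ideal_mult[of p P "-1"] by simp

lemma ideal_diff: "p \<in> ideal_pt P \<Longrightarrow> q \<in> ideal_pt P \<Longrightarrow> p - q \<in> ideal_pt P"
  by (metis ideal_add ideal_uminus diff_conv_add_uminus)

lemma ideal_mult_left: "p \<in> ideal_pt P \<Longrightarrow> r * p \<in> ideal_pt P"
  using ideal_mult by (metis mult.commute)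

lemma ideal_sum: "(\<And>x. x \<in> A \<Longrightarrow> f x \<in> ideal_pt P) \<Longrightarrow> (\<Sum>x\<in>A. f x) \<in> ideal_pt P"
  by (induction A rule: infinite_finite_induct) (auto simp: ideal_zero ideal_add)

lemma eval_ideal: "p \<in> ideal_pt P \<Longrightarrow> eval_at p P = 0"
  unfolding ideal_pt_alt
  by (auto simp: eval_at_add eval_at_mult eval_at_diff lx_def ly_def lz_def)

definition eqv :: "'k::field pt \<Rightarrow> 'k mpoly \<Rightarrow> 'k mpoly \<Rightarrow> bool" where
  "eqv P p q \<longleftrightarrow> p - q \<in> ideal_pt P"

lemma eqv_mult: "eqv P a a' \<Longrightarrow> eqv P b b' \<Longrightarrow> eqv P (a * b) (a' * b')"
proof -
  assume "eqv P a a'" "eqv P b b'"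
  then have "(a - a') * b + a' * (b - b') \<in> ideal_pt P"
    unfolding eqv_def by (intro ideal_add ideal_mult ideal_mult_left)
  then show ?thesis unfolding eqv_def by (simp add: algebra_simps)
qed

lemma eqv_power: "eqv P a a' \<Longrightarrow> eqv P (a ^ n) (a' ^ n)"
proof (induction n)
  case 0 then show ?case by (simp add: eqv_def ideal_zero)
next
  case (Suc n) then show ?case using eqv_mult[of P a a' "a^n" "a'^n"] by simp
qed

lemma Var_pow: "Var v ^ n = Poly_Mapping.single (Poly_Mapping.single v n) 1"
proof (induction n)
  case (Suc n)
  have "Poly_Mapping.single v (Suc n) = Poly_Mapping.single v 1 + Poly_Mapping.single v n"
    by (simp flip: single_add)
  then show ?case using Suc by (simp add: Var_def mult_single)
qed (simp add: Var_def)

lemma mon_decomp: "Poly_Mapping.single m (1::'k::comm_ring_1) =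
   Var X0 ^ Poly_Mapping.lookup m X0 * Var X1 ^ Poly_Mapping.lookup m X1 *
   Var Y0 ^ Poly_Mapping.lookup m Y0 * Var Y1 ^ Poly_Mapping.lookup m Y1 *
   Var Z0 ^ Poly_Mapping.lookup m Z0 * Var Z1 ^ Poly_Mapping.lookup m Z1"
proof -
  have "m = Poly_Mapping.single X0 (Poly_Mapping.lookup m X0) + Poly_Mapping.single X1 (Poly_Mapping.lookup m X1) +
   Poly_Mapping.single Y0 (Poly_Mapping.lookup m Y0) + Poly_Mapping.single Y1 (Poly_Mapping.lookup m Y1) +
   Poly_Mapping.single Z0 (Poly_Mapping.lookup m Z0) + Poly_Mapping.single Z1 (Poly_Mapping.lookup m Z1)"
    by (rule poly_mapping_eqI) (case_tac k; simp add: lookup_add lookup_single)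
  then show ?thesis
    by (simp add: Var_pow mult_single)
qed

lemma Const_power: "Const a ^ n = Const (a ^ n)"
  by (induction n) (simp_all add: Const_one Const_mult)

lemma Const_uminus: "Const (- a) = - Const a" unfolding Const_def by (simp add: single_uminus)
lemma Const_mult_assoc: "Const a * (Const b * p) = Const (a * b) * p"
  by (simp add: mult.assoc[symmetric] Const_mult)

lemma lin_eqv1:
  fixes P :: "'k::field pt"
  assumes "c \<noteq> 0" "Const d * Var u - Const c * Var v \<in> ideal_pt P"
  shows "eqv P (Var v) (Const (d / c) * Var u)"
proof -
  have "Const (-1/c) * (Const d * Var u - Const c * Var v) = Var v - Const (d / c) * Var u"
    using assms(1) by (simp add: right_diff_distrib Const_mult_assoc Const_uminus Const_one)
  then show ?thesis using ideal_mult_left[OF assms(2)] unfolding eqv_def by metis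
qed

lemma lin_eqv2:
  fixes P :: "'k::field pt"
  assumes "d \<noteq> 0" "Const d * Var u - Const c * Var v \<in> ideal_pt P"
  shows "eqv P (Var u) (Const (c / d) * Var v)"
proof -
  have "Const (1/d) * (Const d * Var u - Const c * Var v) = Var u - Const (c / d) * Var v"
    using assms(1) by (simp add: right_diff_distrib Const_mult_assoc Const_one)
  then show ?thesis using ideal_mult_left[OF assms(2)] unfolding eqv_def by metis
qed

lemma eqv_refl_Var: "coord P v \<noteq> 0 \<Longrightarrow> eqv P (Var v) (Const (coord P v / coord P v) * Var v)"
  by (simp add: eqv_def Const_one ideal_zero)

definition grp :: "'k::zero pt \<Rightarrow> var \<Rightarrow> var" where
  "grp P v = (if v = X0 \<or> v = X1 then (if coord P X0 \<noteq> 0 then X0 else X1)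
              else if v = Y0 \<or> v = Y1 then (if coord P Y0 \<noteq> 0 then Y0 else Y1)
              else (if coord P Z0 \<noteq> 0 then Z0 else Z1))"

lemma valid_coords: "valid_pt P \<Longrightarrow> (coord P X0 \<noteq> 0 \<or> coord P X1 \<noteq> 0) \<and>
  (coord P Y0 \<noteq> 0 \<or> coord P Y1 \<noteq> 0) \<and> (coord P Z0 \<noteq> 0 \<or> coord P Z1 \<noteq> 0)"
  by (cases P) (auto simp: valid_pt_def coord_def)

lemma grp_nz: "valid_pt P \<Longrightarrow> coord P (grp P v) \<noteq> 0"
  using valid_coords[of P] by (auto simp: grp_def)

lemma Var_eqv:
  assumes "valid_pt (P::'k::field pt)"
  shows "eqv P (Var v) (Const (coord P v / coord P (grp P v)) * Var (grp P v))"
proof (cases v)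
  case X0
  show ?thesis
  proof (cases "coord P X0 = 0")
    case True
    then have nzb: "coord P X1 \<noteq> 0" using valid_coords[OF assms] by auto
    have g: "grp P X0 = X1" using True by (simp add: grp_def)
    show ?thesis unfolding g X0 by (rule lin_eqv2[OF nzb ideal_lx[of P, unfolded lx_def]])
  next
    case False
    then have nz: "coord P X0 \<noteq> 0" by simp
    have g: "grp P X0 = X0" using False by (simp add: grp_def)
    show ?thesis unfolding g X0 by (rule eqv_refl_Var) (use nz in simp)
  qed
next
  case X1
  show ?thesis
  proof (cases "coord P X0 = 0")
    case True
    then have nzb: "coord P X1 \<noteq> 0" using valid_coords[OF assms] by auto
    have g: "grp P X1 = X1" using True by (simp add: grp_def)
    show ?thesis unfolding g X1 by (rule eqv_refl_Var) (use nzb in simp)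
  next
    case False
    then have nz: "coord P X0 \<noteq> 0" by simp
    have g: "grp P X1 = X0" using False by (simp add: grp_def)
    show ?thesis unfolding g X1 by (rule lin_eqv1[OF nz ideal_lx[of P, unfolded lx_def]])
  qed
next
  case Y0
  show ?thesis
  proof (cases "coord P Y0 = 0")
    case True
    then have nzb: "coord P Y1 \<noteq> 0" using valid_coords[OF assms] by auto
    have g: "grp P Y0 = Y1" using True by (simp add: grp_def)
    show ?thesis unfolding g Y0 by (rule lin_eqv2[OF nzb ideal_ly[of P, unfolded ly_def]])
  next
    case False
    then have nz: "coord P Y0 \<noteq> 0" by simp
    have g: "grp P Y0 = Y0" using False by (simp add: grp_def)
    show ?thesis unfolding g Y0 by (rule eqv_refl_Var) (use nz in simp)
  qed
next
  case Y1
  show ?thesis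
  proof (cases "coord P Y0 = 0")
    case True
    then have nzb: "coord P Y1 \<noteq> 0" using valid_coords[OF assms] by auto
    have g: "grp P Y1 = Y1" using True by (simp add: grp_def)
    show ?thesis unfolding g Y1 by (rule eqv_refl_Var) (use nzb in simp)
  next
    case False
    then have nz: "coord P Y0 \<noteq> 0" by simp
    have g: "grp P Y1 = Y0" using False by (simp add: grp_def)
    show ?thesis unfolding g Y1 by (rule lin_eqv1[OF nz ideal_ly[of P, unfolded ly_def]])
  qed
next
  case Z0
  show ?thesis
  proof (cases "coord P Z0 = 0")
    case True
    then have nzb: "coord P Z1 \<noteq> 0" using valid_coords[OF assms] by auto
    have g: "grp P Z0 = Z1" using True by (simp add: grp_def)
    show ?thesis unfolding g Z0 by (rule lin_eqv2[OF nzb ideal_lz[of P, unfolded lz_def]])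
  next
    case False
    then have nz: "coord P Z0 \<noteq> 0" by simp
    have g: "grp P Z0 = Z0" using False by (simp add: grp_def)
    show ?thesis unfolding g Z0 by (rule eqv_refl_Var) (use nz in simp)
  qed
next
  case Z1
  show ?thesis
  proof (cases "coord P Z0 = 0")
    case True
    then have nzb: "coord P Z1 \<noteq> 0" using valid_coords[OF assms] by auto
    have g: "grp P Z1 = Z1" using True by (simp add: grp_def)
    show ?thesis unfolding g Z1 by (rule eqv_refl_Var) (use nzb in simp)
  next
    case False
    then have nz: "coord P Z0 \<noteq> 0" by simp
    have g: "grp P Z1 = Z0" using False by (simp add: grp_def)
    show ?thesis unfolding g Z1 by (rule lin_eqv1[OF nz ideal_lz[of P, unfolded lz_def]])
  qed
qed

definition gmon :: "'k::field pt \<Rightarrow> nat \<Rightarrow> nat \<Rightarrow> nat \<Rightarrow> 'k mpoly" where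
  "gmon P i j k = Var (grp P X0) ^ i * Var (grp P Y0) ^ j * Var (grp P Z0) ^ k"

lemma mon_eqv:
  assumes "valid_pt (P::'k::field pt)"
  shows "\<exists>\<kappa>. eqv P (Poly_Mapping.single m 1)
     (Const \<kappa> * gmon P (Poly_Mapping.lookup m X0 + Poly_Mapping.lookup m X1)
         (Poly_Mapping.lookup m Y0 + Poly_Mapping.lookup m Y1) (Poly_Mapping.lookup m Z0 + Poly_Mapping.lookup m Z1))"
proof -
  define r where "r v = coord P v / coord P (grp P v)" for v
  have e: "eqv P (Var v ^ n) ((Const (r v) * Var (grp P v)) ^ n)" for v n
    unfolding r_def by (rule eqv_power, rule Var_eqv[OF assms])
  let ?l = "Poly_Mapping.lookup m"
  have g: "grp P X1 = grp P X0" "grp P Y1 = grp P Y0" "grp P Z1 = grp P Z0"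
    by (auto simp: grp_def)
  have "eqv P (Poly_Mapping.single m 1)
     ((Const (r X0) * Var (grp P X0)) ^ ?l X0 * (Const (r X1) * Var (grp P X1)) ^ ?l X1 *
      (Const (r Y0) * Var (grp P Y0)) ^ ?l Y0 * (Const (r Y1) * Var (grp P Y1)) ^ ?l Y1 *
      (Const (r Z0) * Var (grp P Z0)) ^ ?l Z0 * (Const (r Z1) * Var (grp P Z1)) ^ ?l Z1)"
    unfolding mon_decomp[of m] by (intro eqv_mult e)
  also have "((Const (r X0) * Var (grp P X0)) ^ ?l X0 * (Const (r X1) * Var (grp P X1)) ^ ?l X1 *
      (Const (r Y0) * Var (grp P Y0)) ^ ?l Y0 * (Const (r Y1) * Var (grp P Y1)) ^ ?l Y1 *
      (Const (r Z0) * Var (grp P Z0)) ^ ?l Z0 * (Const (r Z1) * Var (grp P Z1)) ^ ?l Z1) =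
      Const (r X0 ^ ?l X0 * r X1 ^ ?l X1 * r Y0 ^ ?l Y0 * r Y1 ^ ?l Y1 * r Z0 ^ ?l Z0 * r Z1 ^ ?l Z1)
      * gmon P (?l X0 + ?l X1) (?l Y0 + ?l Y1) (?l Z0 + ?l Z1)"
    unfolding gmon_def g by (simp add: power_mult_distrib power_add mult_ac flip: Const_mult Const_power)
  finally show ?thesis by blast
qed

lemma eval_gmon: "valid_pt P \<Longrightarrow> eval_at (gmon P i j k) P \<noteq> 0"
  by (simp add: gmon_def eval_at_mult eval_at_power grp_nz)

lemma tdeg_lookups: "tdeg m = (i, j, k) \<longleftrightarrow> Poly_Mapping.lookup m X0 + Poly_Mapping.lookup m X1 = i \<and>
   Poly_Mapping.lookup m Y0 + Poly_Mapping.lookup m Y1 = j \<and> Poly_Mapping.lookup m Z0 + Poly_Mapping.lookup m Z1 = k"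
  by (simp add: tdeg_def)

lemma Const_single: "Const c * Poly_Mapping.single m 1 = Poly_Mapping.single m c"
  by (simp add: Const_def mult_single)

lemma Const_sum: "Const (\<Sum>x\<in>A. f x) = (\<Sum>x\<in>A. Const (f x))"
  by (induction A rule: infinite_finite_induct) (simp_all add: Const_zero flip: Const_add)

lemma vanish_ideal:
  assumes "valid_pt (P::'k::field pt)" "p \<in> Rdeg i j k" "eval_at p P = 0"
  shows "p \<in> ideal_pt P"
proof -
  let ?S = "gmon P i j k"
  let ?K = "Poly_Mapping.keys p"
  let ?l = "Poly_Mapping.lookup p"
  have "\<forall>m\<in>?K. \<exists>\<kappa>. eqv P (Poly_Mapping.single m 1) (Const \<kappa> * ?S)"
    using assms(2) mon_eqv[OF assms(1)] by (auto simp: Rdeg_def tdeg_lookups)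
  then obtain \<kappa> where \<kappa>: "\<And>m. m \<in> ?K \<Longrightarrow> eqv P (Poly_Mapping.single m 1) (Const (\<kappa> m) * ?S)"
    by metis
  define c where "c = (\<Sum>m\<in>?K. ?l m * \<kappa> m)"
  have p: "p = (\<Sum>m\<in>?K. Const (?l m) * Poly_Mapping.single m 1)"
    by (subst poly_decomp) (simp add: Const_single)
  have cS: "Const c * ?S = (\<Sum>m\<in>?K. Const (?l m) * (Const (\<kappa> m) * ?S))"
    unfolding c_def Const_sum by (simp add: sum_distrib_right Const_mult_assoc)
  have "p - Const c * ?S = (\<Sum>m\<in>?K. Const (?l m) * (Poly_Mapping.single m 1 - Const (\<kappa> m) * ?S))"
    by (subst cS, subst (1) p) (simp add: right_diff_distrib sum_subtractf)
  also have "\<dots> \<in> ideal_pt P"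
    by (intro ideal_sum ideal_mult_left) (use \<kappa> in \<open>auto simp: eqv_def\<close>)
  finally have I: "p - Const c * ?S \<in> ideal_pt P" .
  from eval_ideal[OF I] assms(3) have "c * eval_at ?S P = 0"
    by (simp add: eval_at_diff eval_at_mult)
  with eval_gmon[OF assms(1)] have "c = 0" by simp
  with I show ?thesis by (simp add: Const_zero)
qed

lemma keys_mscale: "Poly_Mapping.keys (mscale c p) \<subseteq> Poly_Mapping.keys p"
  by (auto simp: mscale_def in_keys_iff Poly_Mapping.map.rep_eq when_def)

lemma Rdeg_add: "p \<in> Rdeg i j k \<Longrightarrow> q \<in> Rdeg i j k \<Longrightarrow> p + q \<in> Rdeg i j k"
  using keys_add[of p q] by (auto simp: Rdeg_def)

lemma Rdeg_zero: "0 \<in> Rdeg i j k" by (simp add: Rdeg_def)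

lemma Rdeg_mscale: "p \<in> Rdeg i j k \<Longrightarrow> mscale c p \<in> Rdeg i j k"
  using keys_mscale[of c p] by (auto simp: Rdeg_def)

lemma Rdeg_subspace: "VS.subspace (Rdeg i j k)"
  by (rule VS.subspaceI) (auto intro: Rdeg_add Rdeg_zero Rdeg_mscale)

lemma tdeg_add: "tdeg (a + b) = (case tdeg a of (i1,j1,k1) \<Rightarrow> case tdeg b of (i2,j2,k2) \<Rightarrow> (i1+i2, j1+j2, k1+k2))"
  by (simp add: tdeg_def lookup_add)

lemma Rdeg_mult: "p \<in> Rdeg i1 j1 k1 \<Longrightarrow> q \<in> Rdeg i2 j2 k2 \<Longrightarrow> p * q \<in> Rdeg (i1+i2) (j1+j2) (k1+k2)"
  using keys_mult[of p q] by (fastforce simp: Rdeg_def tdeg_add)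

lemma Rdeg_Var: "Var X0 \<in> Rdeg 1 0 0" "Var X1 \<in> Rdeg 1 0 0" "Var Y0 \<in> Rdeg 0 1 0"
  "Var Y1 \<in> Rdeg 0 1 0" "Var Z0 \<in> Rdeg 0 0 1" "Var Z1 \<in> Rdeg 0 0 1"
  by (auto simp: Rdeg_def Var_def tdeg_def lookup_single)

lemma Rdeg_one: "1 \<in> Rdeg 0 0 0"
  by (auto simp: Rdeg_def tdeg_def simp flip: single_one)

lemma Rdeg_power: "p \<in> Rdeg i j k \<Longrightarrow> p ^ n \<in> Rdeg (n*i) (n*j) (n*k)"
  by (induction n) (auto simp: Rdeg_one dest: Rdeg_mult)

lemma ideal_pts_subspace: "VS.subspace (ideal_pts X)"
  by (rule VS.subspaceI) (auto simp: ideal_pts_def mscale_Const ideal_zero ideal_add ideal_mult_left)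

lemma (in vector_space) dim_complement:
  assumes sW: "subspace W" and WV: "W \<subseteq> V"
  and fT: "finite T" and TV: "T \<subseteq> V" and sp: "V \<subseteq> span (W \<union> T)"
  and ind: "\<And>c. (\<Sum>x\<in>T. c x *s x) \<in> W \<Longrightarrow> \<forall>x\<in>T. c x = 0"
  and fd: "finite F" "V \<subseteq> span F"
  shows "dim V = dim W + card T"
proof -
  obtain B where B: "B \<subseteq> W" "independent B" "W \<subseteq> span B" "card B = dim W" by (rule basis_exists)
  have fB: "finite B" using independent_span_bound[OF fd(1) B(2)] B(1) WV fd(2) by blast
  have disj: "B \<inter> T = {}"
  proof (rule ccontr)
    assume "B \<inter> T \<noteq> {}"
    then obtain x where x: "x \<in> B" "x \<in> T" by blast
    have "(\<Sum>y\<in>T. (if y = x then 1 else 0) *s y) = x"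
      using fT x(2) by (simp add: if_distrib[of "\<lambda>c. c *s _"] sum.delta' cong: if_cong)
    with x B(1) have "(\<Sum>y\<in>T. (if y = x then 1 else 0) *s y) \<in> W" by auto
    from ind[OF this] x(2) have "(if x = x then (1::'a) else 0) = 0" by blast
    then show False by simp
  qed
  have indBT: "independent (B \<union> T)"
  proof (rule independent_if_scalars_zero)
    show "finite (B \<union> T)" using fB fT by simp
  next
    fix f x assume sum0: "(\<Sum>x\<in>B \<union> T. f x *s x) = 0" and xBT: "x \<in> B \<union> T"
    have split: "(\<Sum>x\<in>B \<union> T. f x *s x) = (\<Sum>x\<in>B. f x *s x) + (\<Sum>x\<in>T. f x *s x)"
      using fB fT disj by (simp add: sum.union_disjoint)
    have sB: "(\<Sum>x\<in>B. f x *s x) \<in> W"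
      using B(1) by (intro subspace_sum[OF sW] subspace_scale[OF sW]) auto
    have "(\<Sum>x\<in>T. f x *s x) = - (\<Sum>x\<in>B. f x *s x)"
      using sum0 split by (simp add: eq_neg_iff_add_eq_0 add.commute)
    then have "(\<Sum>x\<in>T. f x *s x) \<in> W" using subspace_neg[OF sW sB] by simp
    then have fT0: "\<forall>x\<in>T. f x = 0" by (rule ind)
    then have "(\<Sum>x\<in>T. f x *s x) = 0" by simp
    with sum0 split have "(\<Sum>x\<in>B. f x *s x) = 0" by simp
    then have "\<forall>x\<in>B. f x = 0" using independentD[OF B(2) fB] by blast
    with fT0 xBT show "f x = 0" by blast
  qed
  have "V \<subseteq> span (B \<union> T)"
  proof -
    have "W \<union> T \<subseteq> span (B \<union> T)"
      using B(3) span_mono[of B "B \<union> T"] span_superset[of "B \<union> T"] by blast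
    then have "span (W \<union> T) \<subseteq> span (B \<union> T)" by (simp add: span_minimal)
    with sp show ?thesis by blast
  qed
  then have "card (B \<union> T) = dim V"
    by (rule basis_card_eq_dim[rotated]) (use B(1) WV TV indBT in auto)
  then show ?thesis using card_Un_disjoint[OF fB fT disj] B(4) by simp
qed



lemma deg100: "tdeg m = (1,0,0) \<Longrightarrow> m = Poly_Mapping.single X0 1 \<or> m = Poly_Mapping.single X1 1"
proof -
  assume h: "tdeg m = (1,0,0)"
  then have l: "Poly_Mapping.lookup m X0 + Poly_Mapping.lookup m X1 = 1" "Poly_Mapping.lookup m Y0 = 0"
    "Poly_Mapping.lookup m Y1 = 0" "Poly_Mapping.lookup m Z0 = 0" "Poly_Mapping.lookup m Z1 = 0"
    by (auto simp: tdeg_def)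
  show ?thesis
  proof (cases "Poly_Mapping.lookup m X0 = 1")
    case True
    with l have "m = Poly_Mapping.single X0 1"
      by (intro poly_mapping_eqI) (case_tac k; simp add: lookup_single)
    then show ?thesis ..
  next
    case False
    with l have "m = Poly_Mapping.single X1 1"
      by (intro poly_mapping_eqI) (case_tac k; simp add: lookup_single)
    then show ?thesis ..
  qed
qed

lemma deg010: "tdeg m = (0,1,0) \<Longrightarrow> m = Poly_Mapping.single Y0 1 \<or> m = Poly_Mapping.single Y1 1"
proof -
  assume h: "tdeg m = (0,1,0)"
  then have l: "Poly_Mapping.lookup m Y0 + Poly_Mapping.lookup m Y1 = 1" "Poly_Mapping.lookup m X0 = 0"
    "Poly_Mapping.lookup m X1 = 0" "Poly_Mapping.lookup m Z0 = 0" "Poly_Mapping.lookup m Z1 = 0"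
    by (auto simp: tdeg_def)
  show ?thesis
  proof (cases "Poly_Mapping.lookup m Y0 = 1")
    case True
    with l have "m = Poly_Mapping.single Y0 1"
      by (intro poly_mapping_eqI) (case_tac k; simp add: lookup_single)
    then show ?thesis ..
  next
    case False
    with l have "m = Poly_Mapping.single Y1 1"
      by (intro poly_mapping_eqI) (case_tac k; simp add: lookup_single)
    then show ?thesis ..
  qed
qed

lemma mono_single_var: "mono P (Poly_Mapping.single v 1) = coord P v"
  by (simp add: mono_def)

lemma mono_single_var': "mono P (Poly_Mapping.single v (Suc 0)) = coord P v"
  by (simp add: mono_def)

lemma lin_eval:
  assumes "Poly_Mapping.keys L \<subseteq> {Poly_Mapping.single u 1, Poly_Mapping.single w 1}" "u \<noteq> w"
  shows "eval_at L P = Poly_Mapping.lookup L (Poly_Mapping.single u 1) * coord P u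
     + Poly_Mapping.lookup L (Poly_Mapping.single w 1) * coord P w"
proof -
  have ne: "Poly_Mapping.single u (1::nat) \<noteq> Poly_Mapping.single w 1"
    using assms(2) by (metis lookup_single_eq lookup_single_not_eq zero_neq_one)
  show ?thesis
    by (subst eval_at_superset[of "{Poly_Mapping.single u 1, Poly_Mapping.single w 1}"])
      (use assms ne in \<open>simp_all add: mono_single_var mono_single_var'\<close>)
qed

lemma lin_nz:
  assumes "Poly_Mapping.keys L \<subseteq> {a, b}" "L \<noteq> 0"
  shows "Poly_Mapping.lookup L a \<noteq> 0 \<or> Poly_Mapping.lookup L b \<noteq> 0"
proof (rule ccontr)
  assume "\<not> ?thesis"
  then have h: "Poly_Mapping.lookup L a = 0" "Poly_Mapping.lookup L b = 0" by auto
  have "Poly_Mapping.lookup L x = 0" for x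
  proof (rule ccontr)
    assume nz: "Poly_Mapping.lookup L x \<noteq> 0"
    then have "x \<in> Poly_Mapping.keys L" by (simp add: in_keys_iff)
    then have "x = a \<or> x = b" using assms(1) by blast
    then show False using h nz by auto
  qed
  then have "L = 0" by (intro poly_mapping_eqI) simp
  then show False using assms(2) by simp
qed

lemma cross:
  fixes l0 l1 a0 a1 b0 b1 :: "'k::field"
  assumes "l0 * a0 + l1 * a1 = 0" "l0 * b0 + l1 * b1 = 0" "l0 \<noteq> 0 \<or> l1 \<noteq> 0"
  shows "a0 * b1 = a1 * b0"
proof -
  have "l0 * (a0 * b1 - a1 * b0) = b1 * (l0 * a0 + l1 * a1) - a1 * (l0 * b0 + l1 * b1)"
    by (simp add: algebra_simps)
  moreover have "l1 * (a0 * b1 - a1 * b0) = a0 * (l0 * b0 + l1 * b1) - b0 * (l0 * a0 + l1 * a1)"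
    by (simp add: algebra_simps)
  ultimately show ?thesis using assms by auto
qed

lemma line_cross:
  fixes X :: "'k::field pt set"
  assumes "line110 L L'" "\<forall>P \<in> X. on_line L L' P" "P \<in> X" "Q \<in> X"
  shows "coord P X0 * coord Q X1 = coord P X1 * coord Q X0"
    "coord P Y0 * coord Q Y1 = coord P Y1 * coord Q Y0"
proof -
  have kL: "Poly_Mapping.keys L \<subseteq> {Poly_Mapping.single X0 1, Poly_Mapping.single X1 1}"
    using assms(1) deg100 by (auto simp: line110_def Rdeg_def)
  have kL': "Poly_Mapping.keys L' \<subseteq> {Poly_Mapping.single Y0 1, Poly_Mapping.single Y1 1}"
    using assms(1) deg010 by (auto simp: line110_def Rdeg_def)
  show "coord P X0 * coord Q X1 = coord P X1 * coord Q X0"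
    apply (rule cross)
    using assms lin_eval[OF kL, of P] lin_eval[OF kL, of Q] lin_nz[OF kL] 
    by (auto simp: on_line_def line110_def mult.commute)
  show "coord P Y0 * coord Q Y1 = coord P Y1 * coord Q Y0"
    apply (rule cross)
    using assms lin_eval[OF kL', of P] lin_eval[OF kL', of Q] lin_nz[OF kL'] 
    by (auto simp: on_line_def line110_def mult.commute)
qed

lemma prop_pair:
  fixes a0 a1 p0 p1 ae pe :: "'k::field"
  assumes "a0 * p1 = a1 * p0" "a0 \<noteq> 0 \<or> a1 \<noteq> 0" "pe \<noteq> 0"
    "(pe = p0 \<and> ae = a0) \<or> (pe = p1 \<and> ae = a1)"
  shows "ae \<noteq> 0 \<and> a0 = (p0 / pe) * ae \<and> a1 = (p1 / pe) * ae"
  using assms(4)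
proof
  assume h: "pe = p0 \<and> ae = a0"
  then have p0: "p0 \<noteq> 0" using assms(3) by simp
  have a1: "a1 = (p1 / p0) * a0" using assms(1) p0 by (simp add: field_simps)
  have "a0 \<noteq> 0" using assms(2) a1 by auto
  then show ?thesis using h a1 p0 by simp
next
  assume h: "pe = p1 \<and> ae = a1"
  then have p1: "p1 \<noteq> 0" using assms(3) by simp
  have a0: "a0 = (p0 / p1) * a1" using assms(1) p1 by (simp add: field_simps)
  have "a1 \<noteq> 0" using assms(2) a0 by auto
  then show ?thesis using h a0 p1 by simp
qed

lemma same_pt_coord: "same_pt P Q \<longleftrightarrow> coord P X0 * coord Q X1 = coord P X1 * coord Q X0 \<and>
   coord P Y0 * coord Q Y1 = coord P Y1 * coord Q Y0 \<and> coord P Z0 * coord Q Z1 = coord P Z1 * coord Q Z0"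
  by (cases P; cases Q) (auto simp: same_pt_def coord_def)

lemma poly_vanish:
  fixes d :: "nat \<Rightarrow> 'k::field"
  assumes "finite S" "r \<le> card S" "\<forall>x\<in>S. (\<Sum>g<r. d g * x ^ g) = 0"
  shows "\<forall>g<r. d g = 0"
proof -
  define p where "p = (\<Sum>g<r. monom (d g) g)"
  have cp: "coeff p g = (if g < r then d g else 0)" for g
    unfolding p_def by (simp add: coeff_sum coeff_monom)
  have pp: "poly p x = (\<Sum>g<r. d g * x ^ g)" for x
    unfolding p_def by (simp add: poly_sum poly_monom)
  have "p = 0"
  proof (rule ccontr)
    assume nz: "p \<noteq> 0"
    have "degree p < r"
    proof -
      have "r > 0" using nz unfolding p_def by (cases r) auto
      moreover have "degree p \<le> r - 1"
        by (rule degree_le) (auto simp: cp)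
      ultimately show ?thesis by linarith
    qed
    moreover have "card S \<le> card {x. poly p x = 0}"
      by (rule card_mono[OF poly_roots_finite[OF nz]]) (use assms(3) pp in auto)
    ultimately show False using card_poly_roots_bound[OF nz] assms(2) by linarith
  qed
  then show ?thesis using cp by (metis coeff_0)
qed

lemma poly_low:
  assumes "degree (p::'k::comm_ring_1 poly) < r"
  shows "poly p x = (\<Sum>g<r. coeff p g * x ^ g)"
  unfolding poly_altdef
  by (rule sum.mono_neutral_left) (use assms in \<open>auto simp: coeff_eq_0\<close>)



lemma mon_sum: "m = Poly_Mapping.single X0 (Poly_Mapping.lookup m X0) + Poly_Mapping.single X1 (Poly_Mapping.lookup m X1) +
   Poly_Mapping.single Y0 (Poly_Mapping.lookup m Y0) + Poly_Mapping.single Y1 (Poly_Mapping.lookup m Y1) +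
   Poly_Mapping.single Z0 (Poly_Mapping.lookup m Z0) + Poly_Mapping.single Z1 (Poly_Mapping.lookup m Z1)"
  by (rule poly_mapping_eqI) (case_tac k; simp add: lookup_add lookup_single)

lemma fin_tdeg: "finite {m. tdeg m = (i,j,k)}"
proof -
  define f where "f = (\<lambda>(a,b,c,d,e,f). Poly_Mapping.single X0 a + Poly_Mapping.single X1 b +
     Poly_Mapping.single Y0 c + Poly_Mapping.single Y1 d + Poly_Mapping.single Z0 e + Poly_Mapping.single Z1 (f::nat))"
  define B where "B = {..i} \<times> {..i} \<times> {..j} \<times> {..j} \<times> {..k} \<times> {..k}"
  have M: "{m. tdeg m = (i,j,k)} \<subseteq> f ` B"
  proof
    fix m assume "m \<in> {m. tdeg m = (i,j,k)}"
    then have h: "tdeg m = (i,j,k)" by simp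
    let ?l = "Poly_Mapping.lookup m"
    have "m = f (?l X0, ?l X1, ?l Y0, ?l Y1, ?l Z0, ?l Z1)"
      unfolding f_def by (simp only: split_conv) (rule mon_sum)
    moreover have "(?l X0, ?l X1, ?l Y0, ?l Y1, ?l Z0, ?l Z1) \<in> B"
      using h unfolding B_def tdeg_def by auto
    ultimately show "m \<in> f ` B" by (rule image_eqI)
  qed
  have "finite B" unfolding B_def by (intro finite_cartesian_product) auto
  then show ?thesis using finite_subset[OF M] finite_imageI by blast
qed

lemma Rdeg_span: "Rdeg i j k \<subseteq> VS.span ((\<lambda>m. Poly_Mapping.single m (1::'k::field)) ` {m. tdeg m = (i,j,k)})"
proof
  fix p :: "'k mpoly" assume p: "p \<in> Rdeg i j k"
  have "p = (\<Sum>m\<in>Poly_Mapping.keys p. Const (Poly_Mapping.lookup p m) * Poly_Mapping.single m 1)"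
    by (subst poly_decomp) (simp add: Const_single)
  also have "\<dots> = (\<Sum>m\<in>Poly_Mapping.keys p. mscale (Poly_Mapping.lookup p m) (Poly_Mapping.single m 1))"
    by (simp add: mscale_Const)
  also have "\<dots> \<in> VS.span ((\<lambda>m. Poly_Mapping.single m (1::'k::field)) ` {m. tdeg m = (i,j,k)})"
  proof (intro VS.span_sum VS.span_scale VS.span_base)
    fix m assume "m \<in> Poly_Mapping.keys p"
    then have "tdeg m = (i,j,k)" using p by (simp add: Rdeg_def)
    then show "Poly_Mapping.single m 1 \<in> (\<lambda>m. Poly_Mapping.single m (1::'k::field)) ` {m. tdeg m = (i,j,k)}"
      by blast
  qed
  finally show "p \<in> VS.span ((\<lambda>m. Poly_Mapping.single m (1::'k::field)) ` {m. tdeg m = (i,j,k)})" .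
qed

locale lsetup =
  fixes X :: "'k::field pt set" and L L' :: "'k mpoly" and lam :: 'k and P0 :: "'k pt"
    and i j k :: nat
  assumes line: "line110 L L'" and fin: "finite X" and valid: "\<forall>P\<in>X. valid_pt P"
    and dist: "\<forall>P\<in>X. \<forall>Q\<in>X. same_pt P Q \<longrightarrow> P = Q"
    and on: "\<forall>P\<in>X. on_line L L' P" and P0: "P0 \<in> X"
    and lam: "\<forall>P\<in>X. coord P Z1 + lam * coord P Z0 \<noteq> 0"
begin

definition "ex = grp P0 X0"
definition "ey = grp P0 Y0"
definition "ell P = coord P Z1 + lam * coord P Z0"
definition "tau P = coord P Z0 / ell P"
definition "om P = coord P ex ^ i * coord P ey ^ j"
definition "r = min (k + 1) (card X)"
definition "t g = Var ex ^ i * Var ey ^ j * Var Z0 ^ g * (Var Z1 + Const lam * Var Z0) ^ (k - g)"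

lemma ex_cases: "ex = X0 \<or> ex = X1" by (auto simp: ex_def grp_def)
lemma ey_cases: "ey = Y0 \<or> ey = Y1" by (auto simp: ey_def grp_def)

lemma prop_x:
  assumes "P \<in> X"
  shows "coord P ex \<noteq> 0 \<and> coord P X0 = (coord P0 X0 / coord P0 ex) * coord P ex
    \<and> coord P X1 = (coord P0 X1 / coord P0 ex) * coord P ex"
  apply (rule prop_pair)
  using line_cross(1)[OF line on assms P0] valid_coords[of P] valid assms
    grp_nz[of P0 X0] valid P0 ex_cases
  by (auto simp: ex_def)

lemma prop_y:
  assumes "P \<in> X"
  shows "coord P ey \<noteq> 0 \<and> coord P Y0 = (coord P0 Y0 / coord P0 ey) * coord P ey
    \<and> coord P Y1 = (coord P0 Y1 / coord P0 ey) * coord P ey"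
  apply (rule prop_pair)
  using line_cross(2)[OF line on assms P0] valid_coords[of P] valid assms
    grp_nz[of P0 Y0] valid P0 ey_cases
  by (auto simp: ey_def)

lemma ell_nz: "P \<in> X \<Longrightarrow> ell P \<noteq> 0"
  using lam by (simp add: ell_def)

lemma om_nz: "P \<in> X \<Longrightarrow> om P \<noteq> 0"
  using prop_x prop_y by (simp add: om_def)

lemma c0_eq: "P \<in> X \<Longrightarrow> coord P Z0 = tau P * ell P"
  using ell_nz by (simp add: tau_def)

lemma c1_eq: "P \<in> X \<Longrightarrow> coord P Z1 = ell P * (1 + tau P * - lam)"
proof -
  assume P: "P \<in> X"
  have "ell P * (1 + tau P * - lam) = ell P - lam * (tau P * ell P)" by (simp add: algebra_simps)
  also have "\<dots> = coord P Z1" using c0_eq[OF P] by (simp add: ell_def)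
  finally show ?thesis by simp
qed

lemma tau_inj: "inj_on tau X"
proof
  fix P Q assume P: "P \<in> X" and Q: "Q \<in> X" and e: "tau P = tau Q"
  have "coord P Z0 * coord Q Z1 = coord P Z1 * coord Q Z0"
  proof -
    have "coord P Z0 * ell Q = coord Q Z0 * ell P"
      using e ell_nz[OF P] ell_nz[OF Q] by (simp add: tau_def field_simps)
    then show ?thesis by (simp add: ell_def algebra_simps)
  qed
  then have "same_pt P Q"
    using line_cross[OF line on P Q] by (simp add: same_pt_coord)
  then show "P = Q" using dist P Q by blast
qed

lemma card_tau: "card (tau ` X) = card X"
  using card_image[OF tau_inj] .

lemma Rdeg_mult': "p \<in> Rdeg i1 j1 k1 \<Longrightarrow> q \<in> Rdeg i2 j2 k2 \<Longrightarrow> a = i1 + i2 \<Longrightarrow> b = j1 + j2 \<Longrightarrow> c = k1 + k2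
   \<Longrightarrow> p * q \<in> Rdeg a b c"
  using Rdeg_mult by blast

lemma Rdeg_power': "p \<in> Rdeg i1 j1 k1 \<Longrightarrow> a = n * i1 \<Longrightarrow> b = n * j1 \<Longrightarrow> c = n * k1 \<Longrightarrow> p ^ n \<in> Rdeg a b c"
  using Rdeg_power by blast

lemma t_in_V: "g \<le> k \<Longrightarrow> t g \<in> Rdeg i j k"
proof -
  assume g: "g \<le> k"
  have x: "Var ex \<in> Rdeg 1 0 0" using ex_cases Rdeg_Var by auto
  have y: "Var ey \<in> Rdeg 0 1 0" using ey_cases Rdeg_Var by auto
  have z: "Var Z1 + Const lam * Var Z0 \<in> Rdeg 0 0 1"
    using Rdeg_add[OF Rdeg_Var(6) Rdeg_mscale[OF Rdeg_Var(5), of lam]] by (simp add: mscale_Const)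
  have a: "Var ex ^ i \<in> Rdeg i 0 0" by (rule Rdeg_power'[OF x]) simp_all
  have b: "Var ey ^ j \<in> Rdeg 0 j 0" by (rule Rdeg_power'[OF y]) simp_all
  have c: "Var Z0 ^ g \<in> Rdeg 0 0 g" by (rule Rdeg_power'[OF Rdeg_Var(5)]) simp_all
  have d: "(Var Z1 + Const lam * Var Z0) ^ (k - g) \<in> Rdeg 0 0 (k - g)" by (rule Rdeg_power'[OF z]) simp_all
  have ab: "Var ex ^ i * Var ey ^ j \<in> Rdeg i j 0" by (rule Rdeg_mult'[OF a b]) simp_all
  have abc: "Var ex ^ i * Var ey ^ j * Var Z0 ^ g \<in> Rdeg i j g" by (rule Rdeg_mult'[OF ab c]) simp_all
  show ?thesis unfolding t_def by (rule Rdeg_mult'[OF abc d]) (use g in simp_all)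
qed

lemma eval_t: "P \<in> X \<Longrightarrow> g \<le> k \<Longrightarrow> eval_at (t g) P = om P * ell P ^ k * tau P ^ g"
proof -
  assume P: "P \<in> X" and g: "g \<le> k"
  have "eval_at (t g) P = om P * coord P Z0 ^ g * ell P ^ (k - g)"
    by (simp add: t_def eval_at_mult eval_at_power eval_at_add om_def ell_def)
  also have "\<dots> = om P * (tau P ^ g * ell P ^ (g + (k - g)))"
    by (simp add: c0_eq[OF P] power_mult_distrib power_add)
  also have "g + (k - g) = k" using g by simp
  finally show ?thesis by simp
qed

lemma r_le: "r \<le> k + 1" "r \<le> card X" by (auto simp: r_def)

lemma indep:
  assumes h: "\<forall>P\<in>X. (\<Sum>g<r. d g * eval_at (t g) P) = 0"
  shows "\<forall>g<r. d g = 0"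
proof -
  have "\<forall>x\<in>tau ` X. (\<Sum>g<r. d g * x ^ g) = 0"
  proof
    fix x assume "x \<in> tau ` X"
    then obtain P where P: "P \<in> X" and x: "x = tau P" by blast
    have "(\<Sum>g<r. d g * eval_at (t g) P) = (\<Sum>g<r. (om P * ell P ^ k) * (d g * tau P ^ g))"
      by (rule sum.cong) (use r_le P in \<open>auto simp: eval_t\<close>)
    also have "\<dots> = (om P * ell P ^ k) * (\<Sum>g<r. d g * tau P ^ g)"
      by (simp add: sum_distrib_left)
    finally have "(om P * ell P ^ k) * (\<Sum>g<r. d g * tau P ^ g) = 0" using h P by simp
    then show "(\<Sum>g<r. d g * x ^ g) = 0" using om_nz[OF P] ell_nz[OF P] x by simp
  qed
  then show ?thesis
    by (intro poly_vanish[of "tau ` X"]) (use fin r_le card_tau in auto)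
qed

lemma inj_t: "inj_on t {..<r}"
proof
  fix a b assume a: "a \<in> {..<r}" and b: "b \<in> {..<r}" and e: "t a = t b"
  show "a = b"
  proof (rule ccontr)
    assume ab: "a \<noteq> b"
    define d where "d g = (if g = a then 1 else if g = b then -1 else (0::'k))" for g
    have "\<forall>P\<in>X. (\<Sum>g<r. d g * eval_at (t g) P) = 0"
    proof
      fix P assume P: "P \<in> X"
      have "(\<Sum>g<r. d g * eval_at (t g) P) =
          (\<Sum>g<r. (if g = a then eval_at (t g) P else 0) - (if g = b then eval_at (t g) P else 0))"
        by (rule sum.cong) (auto simp: d_def ab)
      also have "\<dots> = eval_at (t a) P - eval_at (t b) P"
        using a b by (simp add: sum_subtractf)
      also have "\<dots> = 0" using e by simp
      finally show "(\<Sum>g<r. d g * eval_at (t g) P) = 0" .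
    qed
    from indep[OF this] a have "d a = 0" by simp
    then show False by (simp add: d_def)
  qed
qed

lemma alg6:
  fixes r0 r1 s0 s1 e f t l u :: "'a::comm_semiring_1"
  shows "(r0*e)^n0 * (r1*e)^n1 * (s0*f)^n2 * (s1*f)^n3 * (t*l)^n4 * (l*u)^n5 =
    (e^(n0+n1) * f^(n2+n3)) * l^(n4+n5) * ((r0^n0*r1^n1*s0^n2*s1^n3) * (t^n4 * u^n5))"
  by (simp add: power_mult_distrib power_add mult_ac)

lemma A1_mono:
  assumes m: "tdeg m = (i, j, k)"
  shows "\<exists>Q. degree Q \<le> k \<and> (\<forall>P\<in>X. mono P m = om P * ell P ^ k * poly Q (tau P))"
proof -
  let ?l = "Poly_Mapping.lookup m"
  define \<kappa> where "\<kappa> = (coord P0 X0 / coord P0 ex) ^ ?l X0 * (coord P0 X1 / coord P0 ex) ^ ?l X1 *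
     (coord P0 Y0 / coord P0 ey) ^ ?l Y0 * (coord P0 Y1 / coord P0 ey) ^ ?l Y1"
  define Q where "Q = smult \<kappa> ([:0,1:] ^ ?l Z0 * [:1, -lam:] ^ ?l Z1)"
  have sums: "?l X0 + ?l X1 = i" "?l Y0 + ?l Y1 = j" "?l Z0 + ?l Z1 = k"
    using m by (auto simp: tdeg_def)
  have "degree Q \<le> ?l Z0 + ?l Z1"
  proof -
    have "degree ([:0,1:] ^ ?l Z0 * [:1, -lam:] ^ ?l Z1) \<le> degree ([:0::'k,1:] ^ ?l Z0) + degree ([:1, -lam:] ^ ?l Z1)"
      by (rule degree_mult_le)
    also have "\<dots> \<le> ?l Z0 + ?l Z1"
    proof (intro add_mono)
      have d0: "degree [:0::'k, 1:] \<le> 1" by (rule order_trans[OF degree_pCons_le]) simp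
      have d1: "degree [:1::'k, -lam:] \<le> 1" by (rule order_trans[OF degree_pCons_le]) simp
      show "degree ([:0::'k,1:] ^ ?l Z0) \<le> ?l Z0"
        by (rule le_trans[OF degree_power_le]) (use mult_le_mono1[OF d0, of "?l Z0"] in simp)
      show "degree ([:1::'k,-lam:] ^ ?l Z1) \<le> ?l Z1"
        by (rule le_trans[OF degree_power_le]) (use mult_le_mono1[OF d1, of "?l Z1"] in simp)
    qed
    finally show ?thesis unfolding Q_def using degree_smult_le order_trans by blast
  qed
  then have dQ: "degree Q \<le> k" using sums by simp
  have "mono P m = om P * ell P ^ k * poly Q (tau P)" if P: "P \<in> X" for P :: "'k pt"
  proof -
    note px = prop_x[OF P] and py = prop_y[OF P]
    have e0: "coord P X0 = (coord P0 X0 / coord P0 ex) * coord P ex" using px by blast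
    have e1: "coord P X1 = (coord P0 X1 / coord P0 ex) * coord P ex" using px by blast
    have e2: "coord P Y0 = (coord P0 Y0 / coord P0 ey) * coord P ey" using py by blast
    have e3: "coord P Y1 = (coord P0 Y1 / coord P0 ey) * coord P ey" using py by blast
    have "mono P m = coord P X0 ^ ?l X0 * coord P X1 ^ ?l X1 * coord P Y0 ^ ?l Y0 * coord P Y1 ^ ?l Y1 *
       coord P Z0 ^ ?l Z0 * coord P Z1 ^ ?l Z1"
      by (simp add: mono_UNIV var_UNIV mult.assoc)
    also have "\<dots> = ((coord P0 X0 / coord P0 ex) * coord P ex) ^ ?l X0 * ((coord P0 X1 / coord P0 ex) * coord P ex) ^ ?l X1 *
       ((coord P0 Y0 / coord P0 ey) * coord P ey) ^ ?l Y0 * ((coord P0 Y1 / coord P0 ey) * coord P ey) ^ ?l Y1 *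
       (tau P * ell P) ^ ?l Z0 * (ell P * (1 + tau P * - lam)) ^ ?l Z1"
      by (simp only: e0 e1 e2 e3 c0_eq[OF P] c1_eq[OF P])
    also have "\<dots> = (coord P ex ^ (?l X0 + ?l X1) * coord P ey ^ (?l Y0 + ?l Y1)) * ell P ^ (?l Z0 + ?l Z1) *
       (\<kappa> * (tau P ^ ?l Z0 * (1 + tau P * - lam) ^ ?l Z1))"
      unfolding \<kappa>_def by (rule alg6)
    also have "\<dots> = om P * ell P ^ k * poly Q (tau P)"
      unfolding sums om_def Q_def by (simp add: poly_power)
    finally show ?thesis .
  qed
  with dQ show ?thesis by blast
qed

lemma A1:
  assumes p: "p \<in> Rdeg i j k"
  shows "\<exists>Q. degree Q \<le> k \<and> (\<forall>P\<in>X. eval_at p P = om P * ell P ^ k * poly Q (tau P))"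
proof -
  let ?K = "Poly_Mapping.keys p"
  let ?l = "Poly_Mapping.lookup p"
  have "\<forall>m\<in>?K. \<exists>Q. degree Q \<le> k \<and> (\<forall>P\<in>X. mono P m = om P * ell P ^ k * poly Q (tau P))"
    using p A1_mono by (auto simp: Rdeg_def)
  then obtain F where F: "\<And>m. m \<in> ?K \<Longrightarrow> degree (F m) \<le> k \<and> (\<forall>P\<in>X. mono P m = om P * ell P ^ k * poly (F m) (tau P))"
    by metis
  define Q where "Q = (\<Sum>m\<in>?K. smult (?l m) (F m))"
  have "degree Q \<le> k" unfolding Q_def
    by (rule degree_sum_le) (use F degree_smult_le order_trans in auto)
  moreover have "eval_at p P = om P * ell P ^ k * poly Q (tau P)" if P: "P \<in> X" for P :: "'k pt"
  proof -
    have "eval_at p P = (\<Sum>m\<in>?K. ?l m * (om P * ell P ^ k * poly (F m) (tau P)))"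
      unfolding eval_at_mono by (rule sum.cong) (use F P in auto)
    also have "\<dots> = om P * ell P ^ k * poly Q (tau P)"
      unfolding Q_def by (simp add: poly_sum sum_distrib_left mult_ac)
    finally show ?thesis .
  qed
  ultimately show ?thesis by blast
qed

definition "T = t ` {..<r}"

lemma T_sub: "T \<subseteq> Rdeg i j k"
  using t_in_V r_le by (auto simp: T_def)

lemma card_T: "card T = r"
  using card_image[OF inj_t] by (simp add: T_def)

lemma W_char:
  assumes "q \<in> Rdeg i j k" "\<forall>P\<in>X. eval_at q P = 0"
  shows "q \<in> ideal_pts X \<inter> Rdeg i j k"
proof -
  have "q \<in> ideal_pt P" if "P \<in> X" for P :: "'k pt"
    using vanish_ideal[of P q i j k] valid that assms by blast
  then show ?thesis using assms(1) by (simp add: ideal_pts_def)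
qed

lemma X_ne: "card X > 0" using fin P0 card_gt_0_iff by blast

lemma span_ok: "Rdeg i j k \<subseteq> VS.span ((ideal_pts X \<inter> Rdeg i j k) \<union> T)"
proof
  fix p :: "'k mpoly" assume p: "p \<in> Rdeg i j k"
  obtain Q where dQ: "degree Q \<le> k" and eQ: "\<forall>P\<in>X. eval_at p P = om P * ell P ^ k * poly Q (tau P)"
    using A1[OF p] by blast
  define N where "N = (\<Prod>P\<in>X. [:- tau P, 1:])"
  have N0: "poly N (tau P) = 0" if "P \<in> X" for P :: "'k pt"
    unfolding N_def poly_prod using that fin by auto
  have Nnz: "N \<noteq> 0" unfolding N_def using fin by auto
  have dN: "degree N = card X"
    unfolding N_def by (subst degree_prod_eq_sum_degree) auto
  define Q' where "Q' = (if k < card X then Q else Q mod N)"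
  have dQ': "degree Q' < r"
  proof (cases "k < card X")
    case True then show ?thesis using dQ by (simp add: Q'_def r_def)
  next
    case False
    then have "r = card X" by (simp add: r_def)
    moreover have "degree (Q mod N) < card X"
      using degree_mod_less[OF Nnz, of Q] dN X_ne by auto
    ultimately show ?thesis using False by (simp add: Q'_def)
  qed
  have vQ': "poly Q' (tau P) = poly Q (tau P)" if P: "P \<in> X" for P :: "'k pt"
  proof -
    have "poly (Q mod N) (tau P) = poly Q (tau P)"
      by (simp flip: minus_div_mult_eq_mod add: N0[OF P])
    then show ?thesis by (simp add: Q'_def)
  qed
  define q where "q = (\<Sum>g<r. mscale (coeff Q' g) (t g))"
  have qT: "q \<in> VS.span T"
    unfolding q_def T_def by (intro VS.span_sum VS.span_scale VS.span_base) auto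
  have qV: "q \<in> Rdeg i j k"
    unfolding q_def using t_in_V r_le
    by (intro VS.subspace_sum[OF Rdeg_subspace] VS.subspace_scale[OF Rdeg_subspace]) auto
  have "eval_at q P = eval_at p P" if P: "P \<in> X" for P :: "'k pt"
  proof -
    have "eval_at q P = (\<Sum>g<r. (om P * ell P ^ k) * (coeff Q' g * tau P ^ g))"
      unfolding q_def eval_at_sum eval_at_mscale
      by (rule sum.cong) (use r_le P in \<open>auto simp: eval_t\<close>)
    also have "\<dots> = om P * ell P ^ k * poly Q' (tau P)"
      by (simp add: sum_distrib_left poly_low[OF dQ'])
    also have "\<dots> = eval_at p P" using vQ'[OF P] eQ P by simp
    finally show ?thesis .
  qed
  then have "p - q \<in> ideal_pts X \<inter> Rdeg i j k"
    by (intro W_char VS.subspace_diff[OF Rdeg_subspace p qV]) (simp add: eval_at_diff)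
  then have "p - q \<in> VS.span ((ideal_pts X \<inter> Rdeg i j k) \<union> T)"
    by (intro VS.span_base) auto
  moreover have "q \<in> VS.span ((ideal_pts X \<inter> Rdeg i j k) \<union> T)"
    using qT VS.span_mono[of T] by blast
  ultimately have "(p - q) + q \<in> VS.span ((ideal_pts X \<inter> Rdeg i j k) \<union> T)"
    by (rule VS.span_add)
  then show "p \<in> VS.span ((ideal_pts X \<inter> Rdeg i j k) \<union> T)" by simp
qed

lemma ind_ok:
  assumes "(\<Sum>x\<in>T. mscale (c x) x) \<in> ideal_pts X \<inter> Rdeg i j k"
  shows "\<forall>x\<in>T. c x = 0"
proof -
  have e: "(\<Sum>x\<in>T. mscale (c x) x) = (\<Sum>g<r. mscale (c (t g)) (t g))"
    unfolding T_def by (rule sum.reindex[OF inj_t, unfolded comp_def])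
  have "\<forall>P\<in>X. (\<Sum>g<r. c (t g) * eval_at (t g) P) = 0"
  proof
    fix P assume P: "P \<in> X"
    have "(\<Sum>x\<in>T. mscale (c x) x) \<in> ideal_pt P" using assms P by (auto simp: ideal_pts_def)
    from eval_ideal[OF this] show "(\<Sum>g<r. c (t g) * eval_at (t g) P) = 0"
      unfolding e eval_at_sum eval_at_mscale .
  qed
  from indep[OF this] show ?thesis by (auto simp: T_def)
qed

lemma fin_dim: "\<exists>F. finite F \<and> Rdeg i j k \<subseteq> VS.span (F :: 'k mpoly set)"
  using fin_tdeg[of i j k] Rdeg_span[of i j k] by blast

lemma dim_main: "VS.dim (Rdeg i j k :: 'k mpoly set) = VS.dim (ideal_pts X \<inter> Rdeg i j k) + r"
proof -
  obtain F where F: "finite F" "Rdeg i j k \<subseteq> VS.span (F :: 'k mpoly set)" using fin_dim by blast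
  have "VS.dim (Rdeg i j k :: 'k mpoly set) = VS.dim (ideal_pts X \<inter> Rdeg i j k) + card T"
    by (rule VS.dim_complement[OF VS.subspace_inter[OF ideal_pts_subspace Rdeg_subspace] _ _ T_sub span_ok _ F])
      (use ind_ok in \<open>auto simp: T_def\<close>)
  then show ?thesis by (simp add: card_T)
qed

end

theorem lemma2p6:
  fixes X :: "'k::{alg_closed_field, field_char_0} pt set"
    and L L' :: "'k mpoly"
    and s :: nat
  assumes "line110 L L'"
    and "finite X"
    and "\<forall>P \<in> X. valid_pt P"
    and "\<forall>P \<in> X. \<forall>Q \<in> X. same_pt P Q \<longrightarrow> P = Q"
    and "\<forall>P \<in> X. on_line L L' P"
    and "card X = s"
  shows "\<forall>i j k. hilb X i j k = min (k + 1) s"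
proof (intro allI)
  fix i j k
  show "hilb X i j k = min (k + 1) s"
  proof (cases "X = {}")
    case True
    then have "ideal_pts X = UNIV" by (simp add: ideal_pts_def)
    then show ?thesis using True assms(6) by (simp add: hilb_def)
  next
    case False
    then obtain P0 where P0: "P0 \<in> X" by blast
    have "finite ((\<lambda>P. - coord P Z1 / coord P Z0) ` X)" using assms(2) by simp
    then obtain lam :: 'k where lam: "lam \<notin> (\<lambda>P. - coord P Z1 / coord P Z0) ` X"
      using ex_new_if_finite[OF infinite_UNIV_char_0] by blast
    have lamok: "\<forall>P\<in>X. coord P Z1 + lam * coord P Z0 \<noteq> 0"
    proof
      fix P assume P: "P \<in> X"
      show "coord P Z1 + lam * coord P Z0 \<noteq> 0"
      proof (cases "coord P Z0 = 0")
        case True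
        then show ?thesis using valid_coords[of P] assms(3) P by auto
      next
        case False
        show ?thesis
        proof
          assume "coord P Z1 + lam * coord P Z0 = 0"
          then have "lam = - coord P Z1 / coord P Z0" using False by (simp add: field_simps add_eq_0_iff)
          then show False using lam P by blast
        qed
      qed
    qed
    interpret S: lsetup X L L' lam P0 i j k
      by unfold_locales (use assms P0 lamok in auto)
    show ?thesis
      unfolding hilb_def S.dim_main S.r_def assms(6) by simp
  qed
qed

end
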